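(* Let $\varLambda=\{a_n:n\in\mathbb{N}\}\subseteq\mathbb{R}$ for a real sequence $(a_n)_n$ with $\lim_{n\to\infty}(a_{n+1}-a_n)=\infty$. Then $\varLambda$ has finite local complexity, and for every van Hove sequence $(A_n)_n$ in $\mathbb{R}$ with $\lim_{n\to\infty}\mathrm{card}(A_n\cap\varLambda)=\infty$, the counting autocorrelation and diffraction of $\varLambda$ with respect to $(A_n)_n$ are $\gamma_{\mathrm{count}}=\delta_0$ and $\widehat{\gamma_{\mathrm{count}}}=\lambda$ (Lebesgue measure). In particular, this holds for all van Hove sequences which are nested ($A_n\subseteq A_{n+1}$) and exhausting ($\bigcup_nA_n=\mathbb{R}$).
   Context: Finite local complexity: $\varLambda-\varLambda$ is locally finite. A van Hove sequence in $\mathbb{R}$ is a sequence of compact sets $A_n$ of positive Lebesgue measure with $\mathrm{vol}(\partial^K A_n)/\mathrm{vol}(A_n)\to0$ for all compact $K$, where $\partial^K A=((A+K)\setminus A^\circ)\cup((\overline{\mathbb{R}\setminus A}-K)\cap A)$. For finite $F$, $\gamma_F=\frac{1}{\mathrm{card}(F)}\sum_{x,y\in F}\delta_{x-y}$ if $F\ne\emptyset$, $\gamma_\emptyset=0$; the counting autocorrelation is the vague limit of $\gamma_{\varLambda\cap A_n}$ and its Fourier transform is the counting diffraction. *)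

theory Defs
  imports "HOL-Probability.Probability"
begin

definition diff_set :: "real set \<Rightarrow> real set" where
  "diff_set L = {x - y | x y. x \<in> L \<and> y \<in> L}"

definition locally_finite_set :: "real set \<Rightarrow> bool" where
  "locally_finite_set S \<longleftrightarrow> (\<forall>B. bounded B \<longrightarrow> finite (B \<inter> S))"

definition FLC :: "real set \<Rightarrow> bool" where
  "FLC L \<longleftrightarrow> locally_finite_set (diff_set L)"

definition mink_plus :: "real set \<Rightarrow> real set \<Rightarrow> real set" where
  "mink_plus A K = {a + k | a k. a \<in> A \<and> k \<in> K}"

definition mink_minus :: "real set \<Rightarrow> real set \<Rightarrow> real set" where
  "mink_minus A K = {a - k | a k. a \<in> A \<and> k \<in> K}"

definition vH_boundary :: "real set \<Rightarrow> real set \<Rightarrow> real set" where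
  "vH_boundary K A =
     ((mink_plus A K - interior A) \<union> (mink_minus (closure (UNIV - A)) K \<inter> A))"

definition van_Hove :: "(nat \<Rightarrow> real set) \<Rightarrow> bool" where
  "van_Hove A \<longleftrightarrow>
     (\<forall>n. compact (A n) \<and> measure lborel (A n) > 0) \<and>
     (\<forall>K. compact K \<longrightarrow>
        (\<lambda>n. measure lborel (vH_boundary K (A n)) / measure lborel (A n)) \<longlonglongrightarrow> 0)"

definition Cc :: "(real \<Rightarrow> complex) set" where
  "Cc = {\<phi>. continuous_on UNIV \<phi> \<and> compact (closure {x. \<phi> x \<noteq> 0})}"

definition vague_conv :: "(nat \<Rightarrow> real measure) \<Rightarrow> real measure \<Rightarrow> bool" where
  "vague_conv \<mu>s \<mu> \<longleftrightarrow>
     (\<forall>\<phi>\<in>Cc. (\<lambda>n. integral\<^sup>L (\<mu>s n) \<phi>) \<longlonglongrightarrow> integral\<^sup>L \<mu> \<phi>)"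

text \<open>The finite autocorrelation measure
  \<open>\<gamma>_F = (1/card F) \<Sum>_{x,y\<in>F} \<delta>_{x-y}\<close> (and \<open>\<gamma>_\<emptyset> = 0\<close>), as a point-mass measure.\<close>
definition gamma_fin :: "real set \<Rightarrow> real measure" where
  "gamma_fin F =
     (if F = {} then null_measure (count_space UNIV)
      else density (count_space UNIV)
        (\<lambda>z. ennreal (real (card {(x, y). x \<in> F \<and> y \<in> F \<and> x - y = z}) / real (card F))))"

text \<open>Counting autocorrelation of \<open>L\<close> w.r.t. \<open>A\<close>: the vague limit of \<open>\<gamma>_{L \<inter> A n}\<close>
  (vague limits are unique, so "the autocorrelation is \<open>\<gamma>\<close>" means this).\<close>
definition is_counting_autocorrelation ::
  "real set \<Rightarrow> (nat \<Rightarrow> real set) \<Rightarrow> real measure \<Rightarrow> bool" where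
  "is_counting_autocorrelation L A \<gamma> \<longleftrightarrow> vague_conv (\<lambda>n. gamma_fin (L \<inter> A n)) \<gamma>"

text \<open>Fourier transform of a positive definite measure (Bochner--Schwartz):
  \<open>\<mu> = \<gamma>\<^sup>^\<close> iff for all test functions \<open>\<phi>\<close>,
  \<open>\<gamma>(\<phi> * \<phi>~) = \<integral> |\<phi>\<^sup>\<or>|\<^sup>2 d\<mu>\<close> (the positive measure with this property is unique).\<close>
definition inv_fourier :: "(real \<Rightarrow> complex) \<Rightarrow> real \<Rightarrow> complex" where
  "inv_fourier \<phi> k = (\<integral>x. \<phi> x * cis (2 * pi * k * x) \<partial>lborel)"

definition conv_tilde :: "(real \<Rightarrow> complex) \<Rightarrow> real \<Rightarrow> complex" where
  "conv_tilde \<phi> x = (\<integral>y. \<phi> y * cnj (\<phi> (y - x)) \<partial>lborel)"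

definition is_fourier_transform :: "real measure \<Rightarrow> real measure \<Rightarrow> bool" where
  "is_fourier_transform \<gamma> \<mu> \<longleftrightarrow>
     (\<forall>\<phi>\<in>Cc. integrable \<mu> (\<lambda>k. (cmod (inv_fourier \<phi> k))\<^sup>2) \<and>
        integral\<^sup>L \<gamma> (conv_tilde \<phi>) = complex_of_real (\<integral>k. (cmod (inv_fourier \<phi> k))\<^sup>2 \<partial>\<mu>))"

end

theory Submission
  imports Defs
begin


lemma cis_measurable[measurable]: "cis \<in> borel_measurable borel"
  by (intro borel_measurable_continuous_onI continuous_intros)

lemma cnj_measurable_comp[measurable (raw)]:
  "f \<in> borel_measurable M \<Longrightarrow> (\<lambda>x. cnj (f x)) \<in> borel_measurable M"
  by (rule borel_measurable_continuous_on[where f=cnj]) (auto intro: continuous_intros)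

lemma integrable_prod_mult:
  fixes g1 g2 :: "real \<Rightarrow> real"
  assumes [measurable]: "integrable lborel g1" "integrable lborel g2"
  shows "integrable (lborel \<Otimes>\<^sub>M lborel) (\<lambda>(k, z). g1 k * g2 z)"
proof -
  have m1[measurable]: "g1 \<in> borel_measurable lborel" "g2 \<in> borel_measurable lborel" using assms by auto
  show ?thesis
  proof (rule lborel_pair.Fubini_integrable)
    show "(\<lambda>(k, z). g1 k * g2 z) \<in> borel_measurable (lborel \<Otimes>\<^sub>M lborel)" by measurable
    have "integrable lborel (\<lambda>k. norm (g1 k) * (\<integral>z. norm (g2 z) \<partial>lborel))"
      using assms by (intro integrable_mult_left integrable_norm) 
    then show "integrable lborel (\<lambda>x. \<integral>y. norm (case (x, y) of (k, z) \<Rightarrow> g1 k * g2 z) \<partial>lborel)"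
      by (simp add: abs_mult)
    show "AE x in lborel. integrable lborel (\<lambda>y. case (x, y) of (k, z) \<Rightarrow> g1 k * g2 z)"
      using assms by auto
  qed
qed

lemma fubini_swap:
  fixes G :: "real \<Rightarrow> real \<Rightarrow> complex" and ga gb :: "real \<Rightarrow> real"
  assumes G: "(\<lambda>(k, z). G k z) \<in> borel_measurable (lborel \<Otimes>\<^sub>M lborel)"
    and g: "integrable lborel ga" "integrable lborel gb"
    and bnd: "\<And>k z. norm (G k z) \<le> ga k * gb z"
  shows "(\<integral>k. (\<integral>z. G k z \<partial>lborel) \<partial>lborel) = (\<integral>z. (\<integral>k. G k z \<partial>lborel) \<partial>lborel)"
proof -
  have "integrable (lborel \<Otimes>\<^sub>M lborel) (case_prod G)"
  proof (rule Bochner_Integration.integrable_bound[OF integrable_prod_mult[OF g]])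
    show "case_prod G \<in> borel_measurable (lborel \<Otimes>\<^sub>M lborel)" using G by simp
    show "AE x in lborel \<Otimes>\<^sub>M lborel. norm (case_prod G x) \<le> norm (case x of (k, z) \<Rightarrow> ga k * gb z)"
      using bnd by (auto split: prod.split intro: order_trans[OF _ abs_ge_self])
  qed
  from lborel_pair.Fubini_integral[OF this] show ?thesis by simp
qed



lemma gauss_char: "(\<integral>x. std_normal_density x *\<^sub>R cis (t * x) \<partial>lborel) = complex_of_real (exp (- (t^2) / 2))"
proof -
  have "char std_normal_distribution t = complex_of_real (exp (- (t^2) / 2))"
    using char_std_normal_distribution by simp
  then have "(\<integral>x. std_normal_density x *\<^sub>R iexp (t * x) \<partial>lborel) = complex_of_real (exp (- (t^2) / 2))"
    unfolding char_def by (subst (asm) integral_density) (auto simp: normal_density_nonneg)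
  then show ?thesis by (simp add: cis_conv_exp mult.commute)
qed

lemma gauss_ft:
  assumes s: "s > 0"
  shows "(\<integral>k. complex_of_real (exp (- ((2*pi* s*k)^2)/2)) * cis (2*pi*k*u) \<partial>lborel)
    = complex_of_real (std_normal_density (u/s) / s)"
proof -
  define f where "f x = complex_of_real (exp (- (x^2)/2)) * cis (x * (u/s))" for x
  have f_eq: "f x = sqrt (2*pi) *\<^sub>R (std_normal_density x *\<^sub>R cis ((u/s) * x))" for x
    unfolding f_def std_normal_density_def by (simp add: scaleR_conv_of_real mult.commute)
  have If: "(\<integral>x. f x \<partial>lborel) = sqrt (2*pi) *\<^sub>R complex_of_real (exp (- ((u/s)^2) / 2))"
    unfolding f_eq integral_scaleR_right using gauss_char[of "u/s"] by simp
  have c: "2*pi* s \<noteq> 0" using s by simp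
  have "(\<integral>x. f x \<partial>lborel) = \<bar>2*pi* s\<bar> *\<^sub>R (\<integral>k. f (0 + 2*pi* s*k) \<partial>lborel)"
    by (rule lborel_integral_real_affine[OF c])
  also have "(\<lambda>k. f (0 + 2*pi* s*k)) = (\<lambda>k. complex_of_real (exp (- ((2*pi* s*k)^2)/2)) * cis (2*pi*k*u))"
    using s by (auto simp: f_def fun_eq_iff mult.assoc)
  finally have "(\<integral>k. complex_of_real (exp (- ((2*pi* s*k)^2)/2)) * cis (2*pi*k*u) \<partial>lborel)
     = (1 / (2*pi* s)) *\<^sub>R (sqrt (2*pi) *\<^sub>R complex_of_real (exp (- ((u/s)^2) / 2)))"
    using s If by (simp add: field_simps)
  also have "\<dots> = complex_of_real ((1 / (2*pi * s) * sqrt (2*pi)) * exp (- ((u/s)^2) / 2))"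
    by (simp add: scaleR_conv_of_real)
  also have "\<dots> = complex_of_real (std_normal_density (u/s) / s)"
  proof -
    have "sqrt (2*pi) * sqrt (2*pi) = 2 * pi" by simp
    then have e: "1 / (2*pi * s) * sqrt (2*pi) = 1 / (sqrt (2*pi) * s)"
      using s by (simp add: field_simps)
    show ?thesis unfolding e std_normal_density_def by simp
  qed
  finally show ?thesis .
qed



lemma plancherel:
  fixes \<phi> :: "real \<Rightarrow> complex" and R :: real
  assumes cont: "continuous_on UNIV \<phi>" and supp: "\<And>x. R < \<bar>x\<bar> \<Longrightarrow> \<phi> x = 0"
  shows "integrable lborel (\<lambda>k. (cmod (inv_fourier \<phi> k))\<^sup>2)"
    and "(\<integral>k. (cmod (inv_fourier \<phi> k))\<^sup>2 \<partial>lborel) = (\<integral>x. (cmod (\<phi> x))\<^sup>2 \<partial>lborel)"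
proof -
  have meas[measurable]: "\<phi> \<in> borel_measurable borel" by (rule borel_measurable_continuous_onI[OF cont])
  have measl[measurable]: "\<phi> \<in> borel_measurable lborel" by simp
  obtain M where M: "\<And>x. cmod (\<phi> x) \<le> M"
  proof -
    have "bounded (\<phi> ` cball 0 \<bar>R\<bar>)"
      by (intro compact_imp_bounded compact_continuous_image continuous_on_subset[OF cont]) auto
    then obtain a where a: "\<And>y. y \<in> \<phi> ` cball 0 \<bar>R\<bar> \<Longrightarrow> norm y \<le> a" by (auto simp: bounded_iff)
    have "cmod (\<phi> x) \<le> a" for x
    proof (cases "\<bar>x\<bar> \<le> \<bar>R\<bar>")
      case True then show ?thesis by (intro a) auto
    next
      case False
      then have "\<phi> x = 0" by (intro supp) auto
      moreover have "0 \<le> a" using a[of "\<phi> 0"] by (auto intro: order_trans[OF norm_ge_zero])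
      ultimately show ?thesis by simp
    qed
    then show ?thesis by (rule that)
  qed
  have M0: "0 \<le> M" using M[of 0] by (auto intro: order_trans[OF norm_ge_zero])
  have ind_int: "integrable lborel (\<lambda>x. M * indicator {-\<bar>R\<bar>..\<bar>R\<bar>} x :: real)"
    by (intro integrable_mult_right integrable_real_indicator) auto
  have phi_ind: "cmod (\<phi> x) \<le> M * indicator {-\<bar>R\<bar>..\<bar>R\<bar>} x" for x
  proof (cases "\<bar>x\<bar> \<le> \<bar>R\<bar>")
    case True then show ?thesis using M[of x] by (auto simp: indicator_def)
  next
    case False then show ?thesis using supp[of x] M0 by (auto simp: indicator_def)
  qed
  have int_phi: "integrable lborel \<phi>"
    by (rule Bochner_Integration.integrable_bound[OF ind_int]) (use phi_ind M0 in \<open>auto intro: order_trans[OF _ abs_ge_self]\<close>)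
  have int_nphi: "integrable lborel (\<lambda>x. cmod (\<phi> x))" using int_phi by (rule integrable_norm)
  define P where "P = (\<integral>x. cmod (\<phi> x) \<partial>lborel)"
  define F where "F = inv_fourier \<phi>"
  have F_def': "F k = (\<integral>x. \<phi> x * cis (2 * pi * k * x) \<partial>lborel)" for k
    unfolding F_def inv_fourier_def ..
  have F_meas[measurable]: "F \<in> borel_measurable borel"
    unfolding F_def inv_fourier_def by measurable
  have F_measl[measurable]: "F \<in> borel_measurable lborel" by simp
  have F_bound: "cmod (F k) \<le> P" for k
  proof -
    have "cmod (F k) \<le> (\<integral>x. norm (\<phi> x * cis (2 * pi * k * x)) \<partial>lborel)"
      unfolding F_def' by (rule integral_norm_bound)
    also have "\<dots> = P" unfolding P_def by (simp add: norm_mult)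
    finally show ?thesis .
  qed
  have P0: "0 \<le> P" using F_bound[of 0] by (auto intro: order_trans[OF norm_ge_zero])
  define w where "w s k = exp (- ((2*pi * s * k)^2)/2)" for s k :: real
  have w_meas[measurable]: "w s \<in> borel_measurable borel" for s unfolding w_def by measurable
  have w_int: "integrable lborel (w s)" if s: "s > 0" for s
  proof -
    have N: "integrable lborel std_normal_density"
      using integrable_std_normal_moment[of 0] by simp
    have "integrable lborel (\<lambda>k. std_normal_density (0 + (2*pi* s) * k))"
      by (rule lborel_integrable_real_affine[OF N]) (use s in auto)
    then have "integrable lborel (\<lambda>k. sqrt (2*pi) * std_normal_density (0 + (2*pi* s) * k))"
      by (rule integrable_mult_right)
    moreover have "(\<lambda>k. sqrt (2*pi) * std_normal_density (0 + (2*pi* s) * k)) = w s"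
      by (auto simp: fun_eq_iff w_def std_normal_density_def)
    ultimately show ?thesis by (simp only:)
  qed
  have w_pos: "0 \<le> w s k" for s k unfolding w_def by simp
  define h where "h s x = (\<integral>v. cnj (\<phi> (x - s * v)) * complex_of_real (std_normal_density v) \<partial>lborel)" for s x
  have key: "(\<integral>k. complex_of_real (w s k) * (F k * cnj (F k)) \<partial>lborel) = (\<integral>x. \<phi> x * h s x \<partial>lborel)"
    if s: "s > 0" for s
  proof -
    define G1 where "G1 k x = complex_of_real (w s k) * \<phi> x * (cis (2*pi*k*x) * cnj (F k))" for k x
    have step1: "complex_of_real (w s k) * (F k * cnj (F k)) = (\<integral>x. G1 k x \<partial>lborel)" for k
    proof -
      have "(\<integral>x. G1 k x \<partial>lborel) = (\<integral>x. (complex_of_real (w s k) * cnj (F k)) * (\<phi> x * cis (2*pi*k*x)) \<partial>lborel)"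
        unfolding G1_def by (rule Bochner_Integration.integral_cong) (simp_all add: ac_simps)
      also have "\<dots> = (complex_of_real (w s k) * cnj (F k)) * F k"
        unfolding F_def' by simp
      finally show ?thesis by (simp add: ac_simps)
    qed
    have fub1: "(\<integral>k. (\<integral>x. G1 k x \<partial>lborel) \<partial>lborel) = (\<integral>x. (\<integral>k. G1 k x \<partial>lborel) \<partial>lborel)"
    proof (rule fubini_swap[where ga="\<lambda>k. w s k * P" and gb="\<lambda>x. cmod (\<phi> x)"])
      show "(\<lambda>(k, z). G1 k z) \<in> borel_measurable (lborel \<Otimes>\<^sub>M lborel)"
        unfolding G1_def w_def by measurable
      show "integrable lborel (\<lambda>k. w s k * P)" using w_int[OF s] by (rule integrable_mult_left)
      show "integrable lborel (\<lambda>x. cmod (\<phi> x))" by (rule int_nphi)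
      show "cmod (G1 k z) \<le> w s k * P * cmod (\<phi> z)" for k z
      proof -
        have "cmod (G1 k z) = w s k * cmod (\<phi> z) * cmod (F k)"
          unfolding G1_def using w_pos[of s k] by (simp add: norm_mult)
        also have "\<dots> \<le> w s k * cmod (\<phi> z) * P"
          by (intro mult_left_mono F_bound) (use w_pos[of s k] in simp)
        finally show ?thesis by (simp add: ac_simps)
      qed
    qed
    define G2 where "G2 x k y = complex_of_real (w s k) * (cnj (\<phi> y) * cis (2*pi*k*(x - y)))" for x k y
    have step3: "(\<integral>k. G1 k x \<partial>lborel) = \<phi> x * (\<integral>k. (\<integral>y. G2 x k y \<partial>lborel) \<partial>lborel)" for x
    proof -
      have e: "G1 k x = \<phi> x * (\<integral>y. G2 x k y \<partial>lborel)" for k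
      proof -
        have "cnj (F k) = (\<integral>y. cnj (\<phi> y) * cis (- (2*pi*k*y)) \<partial>lborel)"
          unfolding F_def' by (simp add: Bochner_Integration.integral_cnj[symmetric] cis_cnj del: Bochner_Integration.integral_cnj)
        then have "complex_of_real (w s k) * cis (2*pi*k*x) * cnj (F k)
           = (\<integral>y. (complex_of_real (w s k) * cis (2*pi*k*x)) * (cnj (\<phi> y) * cis (- (2*pi*k*y))) \<partial>lborel)"
          by simp
        also have "\<dots> = (\<integral>y. G2 x k y \<partial>lborel)"
          unfolding G2_def
        proof (rule Bochner_Integration.integral_cong)
          fix y
          have "cis (2*pi*k*x) * cis (- (2*pi*k*y)) = cis (2*pi*k*(x - y))"
            by (simp add: cis_mult algebra_simps)
          then show "complex_of_real (w s k) * cis (2*pi*k*x) * (cnj (\<phi> y) * cis (- (2*pi*k*y))) =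
            complex_of_real (w s k) * (cnj (\<phi> y) * cis (2*pi*k*(x - y)))"
            by (metis mult.assoc mult.left_commute)
        qed simp
        finally show ?thesis unfolding G1_def by (simp add: ac_simps)
      qed
      show ?thesis unfolding e by simp
    qed
    have fub2: "(\<integral>k. (\<integral>y. G2 x k y \<partial>lborel) \<partial>lborel) = (\<integral>y. (\<integral>k. G2 x k y \<partial>lborel) \<partial>lborel)" for x
    proof (rule fubini_swap[where ga="\<lambda>k. w s k" and gb="\<lambda>x. cmod (\<phi> x)"])
      show "(\<lambda>(k, z). G2 x k z) \<in> borel_measurable (lborel \<Otimes>\<^sub>M lborel)"
        unfolding G2_def w_def by measurable
      show "integrable lborel (\<lambda>k. w s k)" using w_int[OF s] by simp
      show "integrable lborel (\<lambda>x. cmod (\<phi> x))" by (rule int_nphi)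
      show "cmod (G2 x k z) \<le> w s k * cmod (\<phi> z)" for k z
        unfolding G2_def using w_pos[of s k] by (simp add: norm_mult)
    qed
    have step6: "(\<integral>k. G2 x k y \<partial>lborel) = cnj (\<phi> y) * complex_of_real (std_normal_density ((x - y)/s) / s)" for x y
    proof -
      have "(\<integral>k. G2 x k y \<partial>lborel) = (\<integral>k. cnj (\<phi> y) * (complex_of_real (exp (- ((2*pi * s * k)^2)/2)) * cis (2*pi*k*(x - y))) \<partial>lborel)"
        unfolding G2_def w_def by (rule Bochner_Integration.integral_cong) (simp_all add: ac_simps)
      also have "\<dots> = cnj (\<phi> y) * complex_of_real (std_normal_density ((x - y)/s) / s)"
        using gauss_ft[OF s, of "x - y"] by simp
      finally show ?thesis .
    qed
    have step7: "(\<integral>y. cnj (\<phi> y) * complex_of_real (std_normal_density ((x - y)/s) / s) \<partial>lborel) = h s x" for x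
    proof -
      have c: "- s \<noteq> 0" using s by simp
      have "(\<integral>y. cnj (\<phi> y) * complex_of_real (std_normal_density ((x - y)/s) / s) \<partial>lborel)
        = \<bar>- s\<bar> *\<^sub>R (\<integral>v. cnj (\<phi> (x + (- s) * v)) * complex_of_real (std_normal_density ((x - (x + (- s) * v))/s) / s) \<partial>lborel)"
        by (rule lborel_integral_real_affine[OF c])
      also have "(\<lambda>v. cnj (\<phi> (x + (- s) * v)) * complex_of_real (std_normal_density ((x - (x + (- s) * v))/s) / s))
          = (\<lambda>v. (1/s) *\<^sub>R (cnj (\<phi> (x - s * v)) * complex_of_real (std_normal_density v)))"
        using s by (auto simp: fun_eq_iff scaleR_conv_of_real)
      finally show ?thesis unfolding h_def using s by simp
    qed
    have "(\<integral>k. complex_of_real (w s k) * (F k * cnj (F k)) \<partial>lborel) = (\<integral>k. (\<integral>x. G1 k x \<partial>lborel) \<partial>lborel)"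
      by (simp add: step1)
    also have "\<dots> = (\<integral>x. (\<integral>k. G1 k x \<partial>lborel) \<partial>lborel)" by (rule fub1)
    also have "\<dots> = (\<integral>x. \<phi> x * h s x \<partial>lborel)"
      by (simp only: step3 fub2 step6 step7)
    finally show ?thesis .
  qed
  define sq where "sq i = inverse (real (Suc i))" for i :: nat
  have sq_pos: "0 < sq i" for i unfolding sq_def by simp
  have sq_lim: "sq \<longlonglongrightarrow> 0" unfolding sq_def by (rule LIMSEQ_inverse_real_of_nat)
  have sq_dec: "sq (Suc i) \<le> sq i" for i unfolding sq_def by (simp add: field_simps)
  have isc: "isCont \<phi> x" for x using cont by (simp add: continuous_on_eq_continuous_at)
  have N_int: "integrable lborel std_normal_density"
    using integrable_std_normal_moment[of 0] by simp
  have N_pos: "0 \<le> std_normal_density v" for v by (rule normal_density_nonneg)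
  have N_1: "(\<integral>v. std_normal_density v \<partial>lborel) = 1"
    using integral_std_normal_moment_even[of 0] by simp
  have h_int: "integrable lborel (\<lambda>v. cnj (\<phi> (x - s * v)) * complex_of_real (std_normal_density v))" for s x
  proof (rule Bochner_Integration.integrable_bound[where f="\<lambda>v. M * std_normal_density v"])
    show "integrable lborel (\<lambda>v. M * std_normal_density v)" using N_int by (rule integrable_mult_right)
    show "(\<lambda>v. cnj (\<phi> (x - s * v)) * complex_of_real (std_normal_density v)) \<in> borel_measurable lborel"
      by measurable
    show "AE v in lborel. norm (cnj (\<phi> (x - s * v)) * complex_of_real (std_normal_density v)) \<le> norm (M * std_normal_density v)"
      using M M0 N_pos by (auto simp: norm_mult intro!: mult_right_mono)
  qed
  have h_bound: "cmod (h s x) \<le> M" for s x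
  proof -
    have "cmod (h s x) \<le> (\<integral>v. norm (cnj (\<phi> (x - s * v)) * complex_of_real (std_normal_density v)) \<partial>lborel)"
      unfolding h_def by (rule integral_norm_bound)
    also have "\<dots> \<le> (\<integral>v. M * std_normal_density v \<partial>lborel)"
      using h_int[of x s] N_int M N_pos by (intro integral_mono integrable_norm integrable_mult_right) (auto simp: norm_mult intro!: mult_right_mono)
    also have "\<dots> = M" using N_1 by simp
    finally show ?thesis .
  qed
  have h_meas[measurable]: "h s \<in> borel_measurable lborel" for s
    unfolding h_def by measurable
  have D1: "(\<lambda>i. h (sq i) x) \<longlonglongrightarrow> cnj (\<phi> x)" for x
  proof -
    have "(\<lambda>i. h (sq i) x) \<longlonglongrightarrow> (\<integral>v. cnj (\<phi> x) * complex_of_real (std_normal_density v) \<partial>lborel)"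
      unfolding h_def
    proof (rule integral_dominated_convergence[where w="\<lambda>v. M * std_normal_density v"])
      show "integrable lborel (\<lambda>v. M * std_normal_density v)" using N_int by (rule integrable_mult_right)
      show "(\<lambda>v. cnj (\<phi> x) * complex_of_real (std_normal_density v)) \<in> borel_measurable lborel" by measurable
      show "(\<lambda>v. cnj (\<phi> (x - sq i * v)) * complex_of_real (std_normal_density v)) \<in> borel_measurable lborel" for i
        by measurable
      show "AE v in lborel. (\<lambda>i. cnj (\<phi> (x - sq i * v)) * complex_of_real (std_normal_density v))
          \<longlonglongrightarrow> cnj (\<phi> x) * complex_of_real (std_normal_density v)"
      proof (rule AE_I2)
        fix v
        have "(\<lambda>i. x - sq i * v) \<longlonglongrightarrow> x - 0 * v" by (intro tendsto_intros sq_lim)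
        then have "(\<lambda>i. \<phi> (x - sq i * v)) \<longlonglongrightarrow> \<phi> x"
          using isCont_tendsto_compose[OF isc[of x]] by simp
        then have "(\<lambda>i. cnj (\<phi> (x - sq i * v))) \<longlonglongrightarrow> cnj (\<phi> x)" by (rule tendsto_cnj)
        then show "(\<lambda>i. cnj (\<phi> (x - sq i * v)) * complex_of_real (std_normal_density v))
          \<longlonglongrightarrow> cnj (\<phi> x) * complex_of_real (std_normal_density v)" by (rule tendsto_mult_right)
      qed
      show "AE v in lborel. norm (cnj (\<phi> (x - sq i * v)) * complex_of_real (std_normal_density v)) \<le> M * std_normal_density v" for i
        using M N_pos by (auto simp: norm_mult intro!: mult_right_mono)
    qed
    also have "(\<integral>v. cnj (\<phi> x) * complex_of_real (std_normal_density v) \<partial>lborel) = cnj (\<phi> x)"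
      using N_1 by simp
    finally show ?thesis .
  qed
  have D2: "(\<lambda>i. \<integral>x. \<phi> x * h (sq i) x \<partial>lborel) \<longlonglongrightarrow> (\<integral>x. \<phi> x * cnj (\<phi> x) \<partial>lborel)"
  proof (rule integral_dominated_convergence[where w="\<lambda>x. M * cmod (\<phi> x)"])
    show "integrable lborel (\<lambda>x. M * cmod (\<phi> x))" using int_nphi by (rule integrable_mult_right)
    show "(\<lambda>x. \<phi> x * cnj (\<phi> x)) \<in> borel_measurable lborel" by measurable
    show "(\<lambda>x. \<phi> x * h (sq i) x) \<in> borel_measurable lborel" for i by measurable
    show "AE x in lborel. (\<lambda>i. \<phi> x * h (sq i) x) \<longlonglongrightarrow> \<phi> x * cnj (\<phi> x)"
      by (intro AE_I2 tendsto_intros D1)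
    show "AE x in lborel. norm (\<phi> x * h (sq i) x) \<le> M * cmod (\<phi> x)" for i
      using h_bound by (auto simp: norm_mult intro!: AE_I2 order_trans[OF mult_left_mono[OF h_bound]])
  qed
  define f where "f i k = w (sq i) k * (cmod (F k))\<^sup>2" for i k
  have f_eq: "(\<integral>k. complex_of_real (w s k) * (F k * cnj (F k)) \<partial>lborel) = complex_of_real (\<integral>k. w s k * (cmod (F k))\<^sup>2 \<partial>lborel)" for s
  proof -
    have "complex_of_real (w s k) * (F k * cnj (F k)) = complex_of_real (w s k * (cmod (F k))\<^sup>2)" for k
      by (simp only: complex_norm_square[symmetric] of_real_mult)
    then show ?thesis by (simp only: integral_complex_of_real)
  qed
  have phi_eq: "(\<integral>x. \<phi> x * cnj (\<phi> x) \<partial>lborel) = complex_of_real (\<integral>x. (cmod (\<phi> x))\<^sup>2 \<partial>lborel)"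
    by (simp only: complex_norm_square[symmetric] integral_complex_of_real)
  have lim: "(\<lambda>i. \<integral>k. f i k \<partial>lborel) \<longlonglongrightarrow> (\<integral>x. (cmod (\<phi> x))\<^sup>2 \<partial>lborel)"
  proof -
    have "(\<lambda>i. complex_of_real (\<integral>k. f i k \<partial>lborel)) \<longlonglongrightarrow> complex_of_real (\<integral>x. (cmod (\<phi> x))\<^sup>2 \<partial>lborel)"
      using D2 unfolding phi_eq f_def f_eq[symmetric] key[OF sq_pos] .
    from tendsto_Re[OF this] show ?thesis by simp
  qed
  have i: "integrable lborel (f i)" for i
  proof (rule Bochner_Integration.integrable_bound[where f="\<lambda>k. w (sq i) k * P\<^sup>2"])
    show "integrable lborel (\<lambda>k. w (sq i) k * P\<^sup>2)" using w_int[OF sq_pos] by (rule integrable_mult_left)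
    show "f i \<in> borel_measurable lborel" unfolding f_def w_def by measurable
    show "AE x in lborel. norm (f i x) \<le> norm (w (sq i) x * P\<^sup>2)"
      using w_pos F_bound by (auto simp: f_def intro!: mult_left_mono power_mono)
  qed
  have m: "AE k in lborel. mono (\<lambda>n. f n k)"
  proof (intro AE_I2 incseq_SucI)
    fix k n
    have e: "(2*pi * s * k)\<^sup>2 = s\<^sup>2 * (2*pi*k)\<^sup>2" for s by (simp add: power_mult_distrib)
    have "(sq (Suc n))\<^sup>2 \<le> (sq n)\<^sup>2" using sq_dec sq_pos by (intro power_mono) (auto intro: less_imp_le)
    then have "(2*pi * sq (Suc n) * k)\<^sup>2 \<le> (2*pi * sq n * k)\<^sup>2"
      unfolding e by (intro mult_right_mono) auto
    then have "w (sq n) k \<le> w (sq (Suc n)) k" unfolding w_def by simp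
    then show "f n k \<le> f (Suc n) k" unfolding f_def by (intro mult_right_mono) auto
  qed
  have l: "AE k in lborel. (\<lambda>i. f i k) \<longlonglongrightarrow> (cmod (F k))\<^sup>2"
  proof (intro AE_I2)
    fix k
    have "(\<lambda>i. w (sq i) k) \<longlonglongrightarrow> exp (- ((2*pi * 0 * k)^2)/2)"
      unfolding w_def by (intro tendsto_intros sq_lim) simp
    then have "(\<lambda>i. f i k) \<longlonglongrightarrow> 1 * (cmod (F k))\<^sup>2"
      unfolding f_def by (intro tendsto_intros) simp
    then show "(\<lambda>i. f i k) \<longlonglongrightarrow> (cmod (F k))\<^sup>2" by simp
  qed
  have u: "(\<lambda>k. (cmod (F k))\<^sup>2) \<in> borel_measurable lborel" by measurable
  have mc: "integrable lborel (\<lambda>k. (cmod (F k))\<^sup>2) \<and> (\<integral>k. (cmod (F k))\<^sup>2 \<partial>lborel) = (\<integral>x. (cmod (\<phi> x))\<^sup>2 \<partial>lborel)"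
    using integrable_monotone_convergence[OF i m l lim u] integral_monotone_convergence[OF i m l lim u] by simp
  show "integrable lborel (\<lambda>k. (cmod (inv_fourier \<phi> k))\<^sup>2)" using mc unfolding F_def by simp
  show "(\<integral>k. (cmod (inv_fourier \<phi> k))\<^sup>2 \<partial>lborel) = (\<integral>x. (cmod (\<phi> x))\<^sup>2 \<partial>lborel)" using mc unfolding F_def by simp
qed



lemma gap_eventually:
  fixes a :: "nat \<Rightarrow> real"
  assumes gaps: "filterlim (\<lambda>n. a (Suc n) - a n) at_top sequentially"
  obtains N where "\<And>n. N \<le> n \<Longrightarrow> c \<le> a (Suc n) - a n"
proof -
  have "\<forall>\<^sub>F n in sequentially. c \<le> a (Suc n) - a n"
    using gaps unfolding filterlim_at_top by blast
  then show ?thesis using that unfolding eventually_sequentially by blast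
qed

lemma growth:
  fixes a :: "nat \<Rightarrow> real"
  assumes N: "\<And>n. N \<le> n \<Longrightarrow> c \<le> a (Suc n) - a n"
    and mn: "N \<le> m" "m \<le> n"
  shows "c * real (n - m) \<le> a n - a m"
  using mn(2)
proof (induction n rule: dec_induct)
  case base then show ?case by simp
next
  case (step n)
  have "c * real (Suc n - m) = c * real (n - m) + c"
    using step(1) by (simp add: Suc_diff_le distrib_left)
  also have "\<dots> \<le> (a n - a m) + (a (Suc n) - a n)"
    using step(3) N[of n] step(1) mn(1) by simp
  finally show ?case by simp
qed

lemma fin_bounded:
  fixes a :: "nat \<Rightarrow> real"
  assumes gaps: "filterlim (\<lambda>n. a (Suc n) - a n) at_top sequentially"
    and B: "bounded B"
  shows "finite {n. a n \<in> B}"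
proof -
  obtain N where N: "\<And>n. N \<le> n \<Longrightarrow> 1 \<le> a (Suc n) - a n"
    using gap_eventually[OF gaps] by blast
  obtain C where C: "\<And>x. x \<in> B \<Longrightarrow> norm x \<le> C" using B by (auto simp: bounded_iff)
  have "{n. a n \<in> B} \<subseteq> {..N + nat \<lceil>C - a N\<rceil>}"
  proof
    fix n assume n: "n \<in> {n. a n \<in> B}"
    show "n \<in> {..N + nat \<lceil>C - a N\<rceil>}"
    proof (cases "N \<le> n")
      case True
      have "1 * real (n - N) \<le> a n - a N" by (rule growth[where a=a and N=N and c=1 and m=N and n=n, OF N order_refl True])
      moreover have "a n \<le> C" using C[of "a n"] n by auto
      ultimately have "real (n - N) \<le> C - a N" by simp
      then have "n - N \<le> nat \<lceil>C - a N\<rceil>" by linarith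
      then show ?thesis by simp
    qed simp
  qed
  then show ?thesis by (rule finite_subset) simp
qed

lemma fin_range_bounded:
  fixes a :: "nat \<Rightarrow> real"
  assumes gaps: "filterlim (\<lambda>n. a (Suc n) - a n) at_top sequentially"
    and B: "bounded B"
  shows "finite (range a \<inter> B)"
proof -
  have "range a \<inter> B = a ` {n. a n \<in> B}" by auto
  then show ?thesis using fin_bounded[OF gaps B] by simp
qed

lemma pairs_fin:
  fixes a :: "nat \<Rightarrow> real"
  assumes gaps: "filterlim (\<lambda>n. a (Suc n) - a n) at_top sequentially"
    and R: "0 \<le> R"
  shows "finite {(x, y). x \<in> range a \<and> y \<in> range a \<and> x \<noteq> y \<and> \<bar>x - y\<bar> \<le> R}"
proof -
  obtain N where N: "\<And>n. N \<le> n \<Longrightarrow> R + 1 \<le> a (Suc n) - a n"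
    using gap_eventually[OF gaps] by blast
  define C0 where "C0 = (\<Sum>i<N. \<bar>a i\<bar>)"
  have C0: "\<bar>a i\<bar> \<le> C0" if "i < N" for i
    unfolding C0_def using that by (intro member_le_sum) auto
  define T where "T = range a \<inter> {-(C0 + R)..C0 + R}"
  have T: "finite T" unfolding T_def by (intro fin_range_bounded[OF gaps]) simp
  have big: "R < a n - a m" if "N \<le> m" "m < n" for m n
  proof -
    have mn: "m \<le> n" using that by simp
    have "(R + 1) * real (n - m) \<le> a n - a m"
      by (rule growth[where a=a and N=N and c="R+1" and m=m and n=n, OF N that(1) mn])
    moreover have "R + 1 \<le> (R + 1) * real (n - m)" using that R by simp
    ultimately show ?thesis by simp
  qed
  have "{(x, y). x \<in> range a \<and> y \<in> range a \<and> x \<noteq> y \<and> \<bar>x - y\<bar> \<le> R} \<subseteq> T \<times> T"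
  proof clarify
    fix m n assume ne: "a m \<noteq> a n" and le: "\<bar>a m - a n\<bar> \<le> R"
    have "m < N \<or> n < N"
    proof (rule ccontr)
      assume "\<not> (m < N \<or> n < N)"
      then have "N \<le> m" "N \<le> n" by auto
      moreover have "m \<noteq> n" using ne by auto
      ultimately show False using big[of m n] big[of n m] le by (cases "m < n") auto
    qed
    then show "a m \<in> T \<and> a n \<in> T"
    proof
      assume "m < N" then have "\<bar>a m\<bar> \<le> C0" by (rule C0)
      then show ?thesis using le R unfolding T_def by auto
    next
      assume "n < N" then have "\<bar>a n\<bar> \<le> C0" by (rule C0)
      then show ?thesis using le R unfolding T_def by auto
    qed
  qed
  then show ?thesis by (rule finite_subset) (use T in simp)
qed

lemma FLC_range:
  fixes a :: "nat \<Rightarrow> real"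
  assumes gaps: "filterlim (\<lambda>n. a (Suc n) - a n) at_top sequentially"
  shows "FLC (range a)"
  unfolding FLC_def locally_finite_set_def
proof (intro allI impI)
  fix B :: "real set" assume "bounded B"
  then obtain R where R: "\<And>x. x \<in> B \<Longrightarrow> norm x \<le> R" by (auto simp: bounded_iff)
  define R' where "R' = max 0 R"
  have "B \<inter> diff_set (range a) \<subseteq>
    insert 0 ((\<lambda>(x, y). x - y) ` {(x, y). x \<in> range a \<and> y \<in> range a \<and> x \<noteq> y \<and> \<bar>x - y\<bar> \<le> R'})"
  proof
    fix z assume z: "z \<in> B \<inter> diff_set (range a)"
    then obtain x y where xy: "z = x - y" "x \<in> range a" "y \<in> range a" unfolding diff_set_def by blast
    have "\<bar>x - y\<bar> \<le> R'" using R[of z] z xy unfolding R'_def by auto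
    then show "z \<in> insert 0 ((\<lambda>(x, y). x - y) ` {(x, y). x \<in> range a \<and> y \<in> range a \<and> x \<noteq> y \<and> \<bar>x - y\<bar> \<le> R'})"
      using xy by (cases "x = y") (auto simp: image_iff)
  qed
  moreover have "finite (insert 0 ((\<lambda>(x, y). x - y) ` {(x, y). x \<in> range a \<and> y \<in> range a \<and> x \<noteq> y \<and> \<bar>x - y\<bar> \<le> R'}))"
    using pairs_fin[OF gaps, of R'] unfolding R'_def by simp
  ultimately show "finite (B \<inter> diff_set (range a))" by (rule finite_subset)
qed



lemma gamma_integral:
  fixes F :: "real set" and \<phi> :: "real \<Rightarrow> complex"
  assumes fin: "finite F" and ne: "F \<noteq> {}"
  shows "integral\<^sup>L (gamma_fin F) \<phi> = (\<Sum>p\<in>F \<times> F. \<phi> (fst p - snd p)) / of_nat (card F)"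
proof -
  define c where "c z = real (card {(x, y). x \<in> F \<and> y \<in> F \<and> x - y = z}) / real (card F)" for z
  define D0 where "D0 = (\<lambda>p. fst p - snd p) ` (F \<times> F)"
  have D0: "finite D0" unfolding D0_def using fin by simp
  have cset: "{(x, y). x \<in> F \<and> y \<in> F \<and> x - y = z} = {p \<in> F \<times> F. fst p - snd p = z}" for z
    by auto
  have c0: "c z = 0" if "z \<notin> D0" for z
  proof -
    have "{p \<in> F \<times> F. fst p - snd p = z} = {}" using that unfolding D0_def by (force simp: image_iff)
    then have "card {p \<in> F \<times> F. fst p - snd p = z} = 0" by (metis card.empty)
    then show ?thesis unfolding c_def cset by (simp only: of_nat_0 div_0)
  qed
  have X: "c z *\<^sub>R \<phi> z = (\<Sum>p\<in>{p \<in> F \<times> F. fst p - snd p = z}. \<phi> (fst p - snd p)) / of_nat (card F)" for z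
  proof -
    have "(\<Sum>p\<in>{p \<in> F \<times> F. fst p - snd p = z}. \<phi> (fst p - snd p)) = (\<Sum>p\<in>{p \<in> F \<times> F. fst p - snd p = z}. \<phi> z)"
      by (rule sum.cong) auto
    also have "\<dots> = of_nat (card {p \<in> F \<times> F. fst p - snd p = z}) * \<phi> z" by simp
    finally show "c z *\<^sub>R \<phi> z = (\<Sum>p\<in>{p \<in> F \<times> F. fst p - snd p = z}. \<phi> (fst p - snd p)) / of_nat (card F)"
      unfolding c_def cset by (simp add: scaleR_conv_of_real)
  qed
  have "integral\<^sup>L (gamma_fin F) \<phi> = (\<integral>z. c z *\<^sub>R \<phi> z \<partial>count_space UNIV)"
  proof -
    have "gamma_fin F = density (count_space UNIV) (\<lambda>z. ennreal (c z))"
      unfolding gamma_fin_def c_def using ne by simp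
    moreover have "integral\<^sup>L (density (count_space UNIV) (\<lambda>z. ennreal (c z))) \<phi> = (\<integral>z. c z *\<^sub>R \<phi> z \<partial>count_space UNIV)"
      by (rule integral_density) (auto simp: c_def)
    ultimately show ?thesis by simp
  qed
  also have "\<dots> = (\<Sum>z | z \<in> UNIV \<and> c z *\<^sub>R \<phi> z \<noteq> 0. c z *\<^sub>R \<phi> z)"
  proof (rule lebesgue_integral_count_space_finite_support)
    show "finite {z \<in> UNIV. c z *\<^sub>R \<phi> z \<noteq> 0}"
      by (rule finite_subset[OF _ D0]) (use c0 in auto)
  qed
  also have "\<dots> = (\<Sum>z\<in>D0. c z *\<^sub>R \<phi> z)"
    by (rule sum.mono_neutral_left) (use D0 c0 in auto)
  also have "\<dots> = (\<Sum>z\<in>D0. (\<Sum>p\<in>{p \<in> F \<times> F. fst p - snd p = z}. \<phi> (fst p - snd p))) / of_nat (card F)"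
    unfolding X by (rule sum_divide_distrib[symmetric])
  also have "(\<Sum>z\<in>D0. (\<Sum>p\<in>{p \<in> F \<times> F. fst p - snd p = z}. \<phi> (fst p - snd p))) = (\<Sum>p\<in>F \<times> F. \<phi> (fst p - snd p))"
    by (rule sum.group) (use fin D0 in \<open>auto simp: D0_def\<close>)
  finally show ?thesis .
qed



lemma gamma_bound:
  fixes a :: "nat \<Rightarrow> real" and \<phi> :: "real \<Rightarrow> complex" and F :: "real set"
  assumes fin: "finite F" and ne: "F \<noteq> {}" and sub: "F \<subseteq> range a"
    and supp: "\<And>z. R < \<bar>z\<bar> \<Longrightarrow> \<phi> z = 0" and M: "\<And>z. cmod (\<phi> z) \<le> M"
    and P: "P = {(x, y). x \<in> range a \<and> y \<in> range a \<and> x \<noteq> y \<and> \<bar>x - y\<bar> \<le> R}"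
    and Pfin: "finite P"
  shows "cmod (integral\<^sup>L (gamma_fin F) \<phi> - \<phi> 0) \<le> real (card P) * M / real (card F)"
proof -
  define g where "g p = \<phi> (fst p - snd p)" for p :: "real \<times> real"
  define S where "S = F \<times> F"
  define Off where "Off = S \<inter> - {p. fst p = snd p}"
  have Sfin: "finite S" unfolding S_def using fin by simp
  have M0: "0 \<le> M" using M[of 0] by (auto intro: order_trans[OF norm_ge_zero])
  have "sum g S = (\<Sum>p\<in>S. if fst p = snd p then \<phi> 0 else g p)"
    by (rule sum.cong) (auto simp: g_def)
  also have "\<dots> = (\<Sum>p\<in>S \<inter> {p. fst p = snd p}. \<phi> 0) + sum g Off"
    unfolding Off_def by (rule sum.If_cases[OF Sfin])
  also have "S \<inter> {p. fst p = snd p} = (\<lambda>x. (x, x)) ` F" unfolding S_def by auto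
  also have "(\<Sum>p\<in>(\<lambda>x. (x, x)) ` F. \<phi> 0) = of_nat (card F) * \<phi> 0"
    by (simp add: card_image inj_on_def)
  finally have split: "sum g S = of_nat (card F) * \<phi> 0 + sum g Off" .
  have Offfin: "finite Off" unfolding Off_def using Sfin by simp
  have "sum g Off = sum g (Off \<inter> P)"
  proof (rule sum.mono_neutral_right[OF Offfin])
    show "Off \<inter> P \<subseteq> Off" by simp
    show "\<forall>i\<in>Off - Off \<inter> P. g i = 0"
    proof
      fix p assume p: "p \<in> Off - Off \<inter> P"
      obtain x y where xy: "p = (x, y)" by (cases p)
      have "x \<in> range a" "y \<in> range a" "x \<noteq> y" using p sub unfolding xy Off_def S_def by auto
      then have "\<not> \<bar>x - y\<bar> \<le> R" using p unfolding xy P by auto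
      then show "g p = 0" unfolding xy g_def by (intro supp) simp
    qed
  qed
  then have "cmod (sum g Off) \<le> (\<Sum>p\<in>Off \<inter> P. cmod (g p))" by (simp add: norm_sum)
  also have "\<dots> \<le> of_nat (card (Off \<inter> P)) * M" by (rule sum_bounded_above) (simp add: g_def M)
  also have "\<dots> \<le> real (card P) * M"
    by (intro mult_right_mono M0) (simp add: card_mono Pfin)
  finally have E: "cmod (sum g Off) \<le> real (card P) * M" .
  have cF: "card F > 0" using fin ne by (simp add: card_gt_0_iff)
  have "integral\<^sup>L (gamma_fin F) \<phi> = sum g S / of_nat (card F)"
    unfolding gamma_integral[OF fin ne] g_def S_def ..
  also have "\<dots> = \<phi> 0 + sum g Off / of_nat (card F)"
    unfolding split using cF by (simp add: field_simps)
  finally have "integral\<^sup>L (gamma_fin F) \<phi> - \<phi> 0 = sum g Off / of_nat (card F)" by simp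
  then have "cmod (integral\<^sup>L (gamma_fin F) \<phi> - \<phi> 0) = cmod (sum g Off) / real (card F)"
    by (simp add: norm_divide)
  also have "\<dots> \<le> real (card P) * M / real (card F)"
    using E cF by (intro divide_right_mono) auto
  finally show ?thesis .
qed



lemma cont_supp_bound:
  fixes \<phi> :: "real \<Rightarrow> complex"
  assumes cont: "continuous_on UNIV \<phi>" and supp: "\<And>x. R < \<bar>x\<bar> \<Longrightarrow> \<phi> x = 0"
  obtains M where "\<And>x. cmod (\<phi> x) \<le> M"
proof -
  have "bounded (\<phi> ` cball 0 \<bar>R\<bar>)"
    by (intro compact_imp_bounded compact_continuous_image continuous_on_subset[OF cont]) auto
  then obtain a where a: "\<And>y. y \<in> \<phi> ` cball 0 \<bar>R\<bar> \<Longrightarrow> norm y \<le> a" by (auto simp: bounded_iff)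
  have "cmod (\<phi> x) \<le> a" for x
  proof (cases "\<bar>x\<bar> \<le> \<bar>R\<bar>")
    case True then show ?thesis by (intro a) auto
  next
    case False
    then have "\<phi> x = 0" by (intro supp) auto
    moreover have "0 \<le> a" using a[of "\<phi> 0"] by (auto intro: order_trans[OF norm_ge_zero])
    ultimately show ?thesis by simp
  qed
  then show ?thesis by (rule that)
qed

lemma Cc_support:
  assumes "\<phi> \<in> Cc"
  shows "\<exists>R. 0 \<le> R \<and> continuous_on UNIV \<phi> \<and> (\<forall>x. R < \<bar>x\<bar> \<longrightarrow> \<phi> x = 0)"
proof -
  have c: "continuous_on UNIV \<phi>" and k: "compact (closure {x. \<phi> x \<noteq> 0})"
    using assms unfolding Cc_def by simp_all
  obtain R where R: "\<And>y. y \<in> closure {x. \<phi> x \<noteq> 0} \<Longrightarrow> norm y \<le> R"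
    using compact_imp_bounded[OF k] unfolding bounded_iff by blast
  have z: "\<phi> x = 0" if "max 0 R < \<bar>x\<bar>" for x
  proof (rule ccontr)
    assume "\<phi> x \<noteq> 0"
    then have "x \<in> closure {x. \<phi> x \<noteq> 0}" by (intro subsetD[OF closure_subset]) simp
    then have "norm x \<le> R" by (rule R)
    then show False using that by simp
  qed
  show ?thesis
  proof (intro exI[of _ "max 0 R"] conjI allI impI)
    show "0 \<le> max 0 R" by simp
    show "continuous_on UNIV \<phi>" by (rule c)
    show "\<phi> x = 0" if "max 0 R < \<bar>x\<bar>" for x using that by (rule z)
  qed
qed

lemma vague:
  fixes a :: "nat \<Rightarrow> real"
  assumes gaps: "filterlim (\<lambda>n. a (Suc n) - a n) at_top sequentially"
    and comp: "\<And>n. compact (A n)"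
    and card: "filterlim (\<lambda>n. card (A n \<inter> range a)) at_top sequentially"
  shows "is_counting_autocorrelation (range a) A (return borel 0)"
  unfolding is_counting_autocorrelation_def vague_conv_def
proof
  fix \<phi> assume phiCc: "\<phi> \<in> Cc"
  obtain R where R0: "0 \<le> R" and cont: "continuous_on UNIV \<phi>" and supp: "\<And>x. R < \<bar>x\<bar> \<Longrightarrow> \<phi> x = 0"
    using Cc_support[OF phiCc] by auto
  obtain M where M: "\<And>x. cmod (\<phi> x) \<le> M" using cont_supp_bound[OF cont supp] by blast
  define P where "P = {(x, y). x \<in> range a \<and> y \<in> range a \<and> x \<noteq> y \<and> \<bar>x - y\<bar> \<le> R}"
  have Pfin: "finite P" unfolding P_def by (rule pairs_fin[OF gaps R0])
  have meas: "\<phi> \<in> borel_measurable borel" by (rule borel_measurable_continuous_onI[OF cont])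
  have ret: "integral\<^sup>L (return borel 0) \<phi> = \<phi> 0"
    by (rule integral_return) (use meas in auto)
  have fin: "finite (range a \<inter> A n)" for n
    by (rule fin_range_bounded[OF gaps compact_imp_bounded[OF comp]])
  have cardeq: "card (range a \<inter> A n) = card (A n \<inter> range a)" for n
    by (simp add: Int_commute)
  have ev: "\<forall>\<^sub>F n in sequentially. 1 \<le> card (A n \<inter> range a)"
    using card unfolding filterlim_at_top by blast
  have realinf: "filterlim (\<lambda>n. real (card (A n \<inter> range a))) at_top sequentially"
    by (rule filterlim_compose[OF filterlim_real_sequentially card])
  have g0: "(\<lambda>n. real (card P) * M / real (card (A n \<inter> range a))) \<longlonglongrightarrow> 0"
    by (rule tendsto_divide_0[OF tendsto_const filterlim_at_top_imp_at_infinity[OF realinf]])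
  have "\<forall>\<^sub>F n in sequentially. norm (integral\<^sup>L (gamma_fin (range a \<inter> A n)) \<phi> - \<phi> 0)
      \<le> real (card P) * M / real (card (A n \<inter> range a))"
    using ev
  proof eventually_elim
    case (elim n)
    then have ne: "range a \<inter> A n \<noteq> {}" using cardeq[of n] by auto
    show ?case
      using gamma_bound[OF fin ne _ supp M P_def Pfin] cardeq[of n] by simp
  qed
  from Lim_null_comparison[OF this g0]
  have "(\<lambda>n. integral\<^sup>L (gamma_fin (range a \<inter> A n)) \<phi>) \<longlonglongrightarrow> \<phi> 0" by (rule LIM_zero_cancel)
  then show "(\<lambda>n. integral\<^sup>L (gamma_fin (range a \<inter> A n)) \<phi>) \<longlonglongrightarrow> integral\<^sup>L (return borel 0) \<phi>"
    unfolding ret .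
qed

lemma card_inf:
  fixes a :: "nat \<Rightarrow> real"
  assumes gaps: "filterlim (\<lambda>n. a (Suc n) - a n) at_top sequentially"
    and comp: "\<And>n. compact (A n)"
    and mono: "\<And>n. A n \<subseteq> A (Suc n)" and un: "(\<Union>n. A n) = UNIV"
  shows "filterlim (\<lambda>n. card (A n \<inter> range a)) at_top sequentially"
  unfolding filterlim_at_top
proof
  fix K :: nat
  obtain N where N: "\<And>n. N \<le> n \<Longrightarrow> 1 \<le> a (Suc n) - a n"
    using gap_eventually[OF gaps] by blast
  have sm: "a m < a n" if "N \<le> m" "m < n" for m n
  proof -
    have mn: "m \<le> n" using that by simp
    have "1 * real (n - m) \<le> a n - a m"
      by (rule growth[where a=a and N=N and c=1 and m=m and n=n, OF N that(1) mn])
    moreover have "1 \<le> real (n - m)" using that by simp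
    ultimately show ?thesis by simp
  qed
  define T where "T = a ` {N..<N+K}"
  have inj: "inj_on a {N..<N+K}"
  proof (rule inj_onI)
    fix m n assume "m \<in> {N..<N+K}" "n \<in> {N..<N+K}" "a m = a n"
    then show "m = n" using sm[of m n] sm[of n m] by (cases m n rule: linorder_cases) auto
  qed
  have cT: "card T = K" unfolding T_def using card_image[OF inj] by simp
  have Tfin: "finite T" unfolding T_def by simp
  have "\<forall>t\<in>T. \<exists>n. t \<in> A n" using un by blast
  then obtain f where f: "\<And>t. t \<in> T \<Longrightarrow> t \<in> A (f t)" by metis
  define n0 where "n0 = (\<Sum>t\<in>T. f t)"
  have "K \<le> card (A n \<inter> range a)" if "n0 \<le> n" for n
  proof -
    have "T \<subseteq> A n \<inter> range a"
    proof
      fix t assume t: "t \<in> T"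
      have "f t \<le> n0" unfolding n0_def using Tfin t by (intro member_le_sum) auto
      then have "A (f t) \<subseteq> A n" using that by (intro lift_Suc_mono_le[of A, OF mono]) simp
      then show "t \<in> A n \<inter> range a" using f[OF t] t unfolding T_def by auto
    qed
    moreover have "finite (A n \<inter> range a)"
      using fin_range_bounded[OF gaps compact_imp_bounded[OF comp[of n]]] by (simp add: Int_commute)
    ultimately show ?thesis using cT card_mono by metis
  qed
  then show "\<forall>\<^sub>F n in sequentially. K \<le> card (A n \<inter> range a)"
    unfolding eventually_sequentially by blast
qed

lemma fourier_delta: "is_fourier_transform (return borel 0) lborel"
  unfolding is_fourier_transform_def
proof
  fix \<phi> assume phiCc: "\<phi> \<in> Cc"
  obtain R where R0: "0 \<le> R" and cont: "continuous_on UNIV \<phi>" and supp: "\<And>x. R < \<bar>x\<bar> \<Longrightarrow> \<phi> x = 0"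
    using Cc_support[OF phiCc] by auto
  have meas[measurable]: "\<phi> \<in> borel_measurable borel" by (rule borel_measurable_continuous_onI[OF cont])
  have measl[measurable]: "\<phi> \<in> borel_measurable lborel" by simp
  have ct: "conv_tilde \<phi> \<in> borel_measurable borel"
    unfolding conv_tilde_def by measurable
  have "integral\<^sup>L (return borel 0) (conv_tilde \<phi>) = conv_tilde \<phi> 0"
    by (rule integral_return) (use ct in auto)
  also have "\<dots> = (\<integral>y. \<phi> y * cnj (\<phi> y) \<partial>lborel)" unfolding conv_tilde_def by simp
  also have "\<dots> = complex_of_real (\<integral>x. (cmod (\<phi> x))\<^sup>2 \<partial>lborel)"
    by (simp only: complex_norm_square[symmetric] integral_complex_of_real)
  also have "\<dots> = complex_of_real (\<integral>k. (cmod (inv_fourier \<phi> k))\<^sup>2 \<partial>lborel)"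
    using plancherel(2)[OF cont supp] by simp
  finally show "integrable lborel (\<lambda>k. (cmod (inv_fourier \<phi> k))\<^sup>2) \<and>
      integral\<^sup>L (return borel 0) (conv_tilde \<phi>) = complex_of_real (\<integral>k. (cmod (inv_fourier \<phi> k))\<^sup>2 \<partial>lborel)"
    using plancherel(1)[OF cont supp] by simp
qed

theorem lemma4p3:
  fixes a :: "nat \<Rightarrow> real"
  assumes gaps: "filterlim (\<lambda>n. a (Suc n) - a n) at_top sequentially"
  shows "FLC (range a) \<and>
    (\<forall>A. van_Hove A \<and> filterlim (\<lambda>n. card (A n \<inter> range a)) at_top sequentially \<longrightarrow>
       is_counting_autocorrelation (range a) A (return borel 0) \<and>
       is_fourier_transform (return borel 0) lborel) \<and>
    (\<forall>A. van_Hove A \<and> (\<forall>n. A n \<subseteq> A (Suc n)) \<and> (\<Union>n. A n) = UNIV \<longrightarrow>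
       filterlim (\<lambda>n. card (A n \<inter> range a)) at_top sequentially \<and>
       is_counting_autocorrelation (range a) A (return borel 0) \<and>
       is_fourier_transform (return borel 0) lborel)"
proof (intro conjI allI impI)
  show "FLC (range a)" by (rule FLC_range[OF gaps])
next
  fix A assume H: "van_Hove A \<and> filterlim (\<lambda>n. card (A n \<inter> range a)) at_top sequentially"
  then have comp: "\<And>n. compact (A n)" unfolding van_Hove_def by blast
  show "is_counting_autocorrelation (range a) A (return borel 0)"
    using vague[where A=A, OF gaps comp] H by blast
  show "is_fourier_transform (return borel 0) lborel" by (rule fourier_delta)
next
  fix A assume H: "van_Hove A \<and> (\<forall>n. A n \<subseteq> A (Suc n)) \<and> (\<Union>n. A n) = UNIV"
  then have comp: "\<And>n. compact (A n)" unfolding van_Hove_def by blast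
  have c: "filterlim (\<lambda>n. card (A n \<inter> range a)) at_top sequentially"
    using card_inf[where A=A, OF gaps comp] H by blast
  then show "filterlim (\<lambda>n. card (A n \<inter> range a)) at_top sequentially" .
  show "is_counting_autocorrelation (range a) A (return borel 0)"
    using vague[where A=A, OF gaps comp c] .
  show "is_fourier_transform (return borel 0) lborel" by (rule fourier_delta)
qed


end
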